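(* Let $g\colon\mathbb X\to\mathbb Y$ be twice continuously differentiable, $D\subset\mathbb Y$ closed, $\Phi(x):=g(x)-D$, $(\bar x,0)\in\operatorname{gph}\Phi$ and $u\in\mathbb S_{\mathbb X}$. If FOSCMS$(u)$ holds, i.e., ($\nabla g(\bar x)u\in\mathcal T_D(g(\bar x))$ and) every $y^*\in\mathcal N_D(g(\bar x);\nabla g(\bar x)u)$ with $\nabla g(\bar x)^*y^*=0$ satisfies $y^*=0$, then all of the following hold: (A) if $\nabla g(\bar x)^*y^*=0$, $\nabla^2\langle y^*,g\rangle(\bar x)(u)+\nabla g(\bar x)^*z^*=0$, $y^*\in\mathcal N_D(g(\bar x);\nabla g(\bar x)u)$, $z^*\in D\mathcal N_D(g(\bar x),y^* )(\nabla g(\bar x)u)$, then $y^*=0$; (B) if $\nabla g(\bar x)u=0$: $\nabla g(\bar x)^*y^*=0$, $\nabla g(\bar x)^*\hat z^*=0$, $y^*\in\mathcal N_D(g(\bar x);\nabla g(\bar x)u)$, $\hat z^*\in D\mathcal N_D(g(\bar x),y^* )(0)$ imply $\hat z^*=0$; if $\nabla g(\bar x)u\ne0$: $\nabla g(\bar x)^*y^*=0$, $\nabla g(\bar x)^*\hat z^*=0$, $y^*\in\mathcal N_D(g(\bar x);\nabla g(\bar x)u)$ imply $\hat z^*\notin D_{\mathrm{sub}}\mathcal N_D(g(\bar x),y^* )(\nabla g(\bar x)u/\|\nabla g(\bar x)u\|)$; (C) for every $x^*\in\mathbb X$, $y^*,z^*\in\mathbb Y$ with $x^*=\nabla^2\langle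 y^*,g\rangle(\bar x)(u)+\nabla g(\bar x)^*z^*$, $y^*\in\mathcal N_D(g(\bar x);\nabla g(\bar x)u)\cap\ker\nabla g(\bar x)^*$, $z^*\in D\mathcal N_D(g(\bar x),y^* )(\nabla g(\bar x)u)$, there is $\lambda\in\mathcal N_D(g(\bar x);\nabla g(\bar x)u)$ (in particular $\lambda\in\mathcal N_D(g(\bar x))$) with $x^*=\nabla g(\bar x)^*\lambda$.
   Context: $\mathcal T_D$ Bouligand tangent cone; $\mathcal N_D(y)$ limiting normal cone; $\mathcal N_D(y;w)$ directional limiting normal cone (limits of $\eta_k\in\widehat{\mathcal N}_D(y+t_kw_k)$ with $w_k\to w$, $t_k\searrow0$, $\widehat{\mathcal N}_D$ the regular normal cone). $D\mathcal N_D(y,y^* )$: graphical derivative of the normal cone map $y\mapsto\mathcal N_D(y)$, i.e. $z^*\in D\mathcal N_D(y,y^* )(q)$ iff $(q,z^* )\in\mathcal T_{\operatorname{gph}\mathcal N_D}(y,y^* )$. Graphical subderivative: for a unit vector $q$, $D_{\mathrm{sub}}\mathcal N_D(y,y^* )(q)$ is the set of unit vectors $w$ such that there are $q_k\to q$, $w_k\to w$, $t_k\searrow0$, $\tau_k\searrow0$, $\tau_k/t_k\to\infty$ with $(y+t_kq_k,y^*+\tau_kw_k)\in\operatorname{gph}\mathcal N_D$. $\nabla^2\langle y^*,g\rangle(\bar x)(u)$ Hessian of $x\mapsto\langle y^*,g(x)\rangle$ applied to $u$. *)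

theory Defs
  imports "HOL-Analysis.Analysis"
begin

definition tangent_cone :: "'a::real_normed_vector set \<Rightarrow> 'a \<Rightarrow> 'a set" where
  "tangent_cone S y = {w. \<exists>t wk. (\<forall>k. t k > 0) \<and> t \<longlonglongrightarrow> 0 \<and> wk \<longlonglongrightarrow> w
                              \<and> (\<forall>k. y + t k *\<^sub>R wk k \<in> S)}"

definition regular_normal_cone :: "'a::real_inner set \<Rightarrow> 'a \<Rightarrow> 'a set" where
  "regular_normal_cone D y = {v. y \<in> D \<and>
     (\<forall>\<epsilon>>0. \<exists>\<delta>>0. \<forall>y'\<in>D. norm (y' - y) < \<delta> \<longrightarrow> inner v (y' - y) \<le> \<epsilon> * norm (y' - y))}"

definition limiting_normal_cone :: "'a::real_inner set \<Rightarrow> 'a \<Rightarrow> 'a set" where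
  "limiting_normal_cone D y = {v. \<exists>yk vk. yk \<longlonglongrightarrow> y \<and> vk \<longlonglongrightarrow> v
      \<and> (\<forall>k. vk k \<in> regular_normal_cone D (yk k))}"

definition dir_limiting_normal_cone :: "'a::real_inner set \<Rightarrow> 'a \<Rightarrow> 'a \<Rightarrow> 'a set" where
  "dir_limiting_normal_cone D y w = {v. \<exists>t wk vk. (\<forall>k. t k > 0) \<and> t \<longlonglongrightarrow> 0
      \<and> wk \<longlonglongrightarrow> w \<and> vk \<longlonglongrightarrow> v
      \<and> (\<forall>k. vk k \<in> regular_normal_cone D (y + t k *\<^sub>R wk k))}"

definition gph_normal_cone :: "'a::real_inner set \<Rightarrow> ('a \<times> 'a) set" where
  "gph_normal_cone D = {(y, v). v \<in> limiting_normal_cone D y}"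

definition graph_deriv_normal_cone :: "'a::real_inner set \<Rightarrow> 'a \<Rightarrow> 'a \<Rightarrow> 'a \<Rightarrow> 'a set" where
  "graph_deriv_normal_cone D y v q = {z. (q, z) \<in> tangent_cone (gph_normal_cone D) (y, v)}"

definition graph_subderiv_normal_cone :: "'a::real_inner set \<Rightarrow> 'a \<Rightarrow> 'a \<Rightarrow> 'a \<Rightarrow> 'a set" where
  "graph_subderiv_normal_cone D y v q = {w. norm w = 1 \<and>
     (\<exists>qk wk t \<tau>. qk \<longlonglongrightarrow> q \<and> wk \<longlonglongrightarrow> w \<and> (\<forall>k. t k > 0) \<and> t \<longlonglongrightarrow> 0
        \<and> (\<forall>k. \<tau> k > 0) \<and> \<tau> \<longlonglongrightarrow> 0 \<and> filterlim (\<lambda>k. \<tau> k / t k) at_top sequentially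
        \<and> (\<forall>k. (y + t k *\<^sub>R qk k, v + \<tau> k *\<^sub>R wk k) \<in> gph_normal_cone D))}"

end

theory Submission
  imports Defs "HOL-Analysis.Analysis"
begin



lemma reg_scale:
  assumes c: "c > 0" and v: "v \<in> regular_normal_cone D y"
  shows "c *\<^sub>R v \<in> regular_normal_cone D y"
  unfolding regular_normal_cone_def
proof (safe)
  show "y \<in> D" using v by (simp add: regular_normal_cone_def)
next
  fix e :: real assume e: "e > 0"
  then have "e / c > 0" using c by simp
  then obtain d where d: "d > 0" "\<forall>y'\<in>D. norm (y' - y) < d \<longrightarrow> inner v (y' - y) \<le> (e/c) * norm (y' - y)"
    using v unfolding regular_normal_cone_def by blast
  show "\<exists>d>0. \<forall>y'\<in>D. norm (y' - y) < d \<longrightarrow> inner (c *\<^sub>R v) (y' - y) \<le> e * norm (y' - y)"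
  proof (intro exI[of _ d] conjI ballI impI)
    fix y' assume "y' \<in> D" "norm (y' - y) < d"
    then have "inner v (y' - y) \<le> (e/c) * norm (y' - y)" using d by blast
    then have "c * inner v (y' - y) \<le> c * ((e/c) * norm (y' - y))"
      using c by (intro mult_left_mono) auto
    also have "c * ((e/c) * norm (y' - y)) = e * norm (y' - y)" using c by simp
    finally show "inner (c *\<^sub>R v) (y' - y) \<le> e * norm (y' - y)" by simp
  qed (rule d(1))
qed

lemma lim_scale:
  assumes c: "c > 0" and v: "v \<in> limiting_normal_cone D y"
  shows "c *\<^sub>R v \<in> limiting_normal_cone D y"
proof -
  obtain yk vk where h: "yk \<longlonglongrightarrow> y" "vk \<longlonglongrightarrow> v" "\<forall>k. vk k \<in> regular_normal_cone D (yk k)"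
    using v unfolding limiting_normal_cone_def by blast
  have "(\<lambda>k. c *\<^sub>R vk k) \<longlonglongrightarrow> c *\<^sub>R v" using h(2) by (intro tendsto_intros)
  then show ?thesis unfolding limiting_normal_cone_def using h reg_scale[OF c] by blast
qed

lemma lim_approx:
  assumes v: "v \<in> limiting_normal_cone D p" and e: "e > 0"
  shows "\<exists>a b. norm (a - p) < e \<and> norm (b - v) < e \<and> b \<in> regular_normal_cone D a"
proof -
  obtain yk vk where h: "yk \<longlonglongrightarrow> p" "vk \<longlonglongrightarrow> v" "\<forall>k. vk k \<in> regular_normal_cone D (yk k)"
    using v unfolding limiting_normal_cone_def by blast
  have "eventually (\<lambda>k. dist (yk k) p < e) sequentially" using h(1) e by (rule tendstoD)
  moreover have "eventually (\<lambda>k. dist (vk k) v < e) sequentially" using h(2) e by (rule tendstoD)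
  ultimately have "eventually (\<lambda>k. dist (yk k) p < e \<and> dist (vk k) v < e) sequentially"
    by (rule eventually_conj)
  then obtain k where "dist (yk k) p < e" "dist (vk k) v < e"
    using eventually_sequentially by auto
  then show ?thesis using h(3) by (metis dist_norm)
qed

lemma key:
  assumes tpos: "\<And>k. t k > 0" and t0: "t \<longlonglongrightarrow> 0" and q: "q \<longlonglongrightarrow> w" and wv: "wk \<longlonglongrightarrow> v"
    and N: "\<And>k. wk k \<in> limiting_normal_cone D (y + t k *\<^sub>R q k)"
  shows "v \<in> dir_limiting_normal_cone D y w"
proof -
  have "\<forall>k. \<exists>a b. norm (a - (y + t k *\<^sub>R q k)) < t k * inverse (real (Suc k))
        \<and> norm (b - wk k) < inverse (real (Suc k)) \<and> b \<in> regular_normal_cone D a"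
  proof
    fix k
    have p: "t k * inverse (real (Suc k)) > 0" "inverse (real (Suc k)) > 0" using tpos[of k] by auto
    obtain a b where ab: "norm (a - (y + t k *\<^sub>R q k)) < min (t k * inverse (real (Suc k))) (inverse (real (Suc k)))"
       "norm (b - wk k) < min (t k * inverse (real (Suc k))) (inverse (real (Suc k)))"
       "b \<in> regular_normal_cone D a"
      using lim_approx[OF N[of k], of "min (t k * inverse (real (Suc k))) (inverse (real (Suc k)))"] p
      by auto
    then show "\<exists>a b. norm (a - (y + t k *\<^sub>R q k)) < t k * inverse (real (Suc k))
        \<and> norm (b - wk k) < inverse (real (Suc k)) \<and> b \<in> regular_normal_cone D a" by auto
  qed
  then obtain A B where AB: "\<And>k. norm (A k - (y + t k *\<^sub>R q k)) < t k * inverse (real (Suc k))"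
    "\<And>k. norm (B k - wk k) < inverse (real (Suc k))" "\<And>k. B k \<in> regular_normal_cone D (A k)"
    by metis
  define ww where "ww k = inverse (t k) *\<^sub>R (A k - y)" for k
  have eq: "y + t k *\<^sub>R ww k = A k" for k using tpos[of k] by (simp add: ww_def)
  have diff: "ww k - q k = inverse (t k) *\<^sub>R (A k - (y + t k *\<^sub>R q k))" for k
    using tpos[of k] by (simp add: ww_def algebra_simps)
  have nd: "norm (ww k - q k) \<le> inverse (real (Suc k))" for k
  proof -
    have "norm (ww k - q k) = inverse (t k) * norm (A k - (y + t k *\<^sub>R q k))"
      using tpos[of k] by (simp add: diff)
    also have "\<dots> \<le> inverse (t k) * (t k * inverse (real (Suc k)))"
      using AB(1)[of k] tpos[of k] by (intro mult_left_mono) auto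
    also have "\<dots> = inverse (real (Suc k))" using tpos[of k] by simp
    finally show ?thesis .
  qed
  have "(\<lambda>k. ww k - q k) \<longlonglongrightarrow> 0"
    by (rule Lim_null_comparison[OF _ LIMSEQ_inverse_real_of_nat]) (use nd in auto)
  then have wwc: "ww \<longlonglongrightarrow> w" using Lim_transform[OF q] by blast
  have "(\<lambda>k. B k - wk k) \<longlonglongrightarrow> 0"
    by (rule Lim_null_comparison[OF _ LIMSEQ_inverse_real_of_nat]) (rule always_eventually, rule allI, rule less_imp_le, rule AB(2))
  then have Bc: "B \<longlonglongrightarrow> v" using Lim_transform[OF wv] by blast
  show ?thesis unfolding dir_limiting_normal_cone_def
    using tpos t0 wwc Bc AB(3) eq by (intro CollectI exI[of _ t] exI[of _ ww] exI[of _ B]) auto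
qed

lemma dir_sub_lim:
  assumes "v \<in> dir_limiting_normal_cone D y w"
  shows "v \<in> limiting_normal_cone D y"
proof -
  obtain t wk vk where h: "\<forall>k. t k > 0" "t \<longlonglongrightarrow> 0" "wk \<longlonglongrightarrow> w" "vk \<longlonglongrightarrow> v"
    "\<forall>k. vk k \<in> regular_normal_cone D (y + t k *\<^sub>R wk k)"
    using assms unfolding dir_limiting_normal_cone_def by blast
  have "(\<lambda>k. y + t k *\<^sub>R wk k) \<longlonglongrightarrow> y + 0 *\<^sub>R w" using h by (intro tendsto_intros)
  then show ?thesis unfolding limiting_normal_cone_def using h by auto
qed


lemma gd_dir:
  assumes "zs \<in> graph_deriv_normal_cone D y 0 q"
  shows "zs \<in> dir_limiting_normal_cone D y q"
proof -
  obtain t wk where h: "\<forall>k. t k > 0" "t \<longlonglongrightarrow> 0" "wk \<longlonglongrightarrow> (q, zs)"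
      "\<forall>k. (y, 0) + t k *\<^sub>R wk k \<in> gph_normal_cone D"
    using assms unfolding graph_deriv_normal_cone_def tangent_cone_def by blast
  have N: "snd (wk k) \<in> limiting_normal_cone D (y + t k *\<^sub>R fst (wk k))" for k
  proof -
    have "t k *\<^sub>R snd (wk k) \<in> limiting_normal_cone D (y + t k *\<^sub>R fst (wk k))"
      using h(4)[rule_format, of k] by (cases "wk k") (simp add: gph_normal_cone_def)
    from lim_scale[OF _ this, of "inverse (t k)"] show ?thesis using h(1)[rule_format, of k] by simp
  qed
  have "(\<lambda>k. fst (wk k)) \<longlonglongrightarrow> q" using tendsto_fst[OF h(3)] by simp
  moreover have "(\<lambda>k. snd (wk k)) \<longlonglongrightarrow> zs" using tendsto_snd[OF h(3)] by simp
  ultimately show ?thesis using key[of t "\<lambda>k. fst (wk k)" q "\<lambda>k. snd (wk k)" zs D y] h N by blast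
qed

lemma sub_dir:
  assumes "zh \<in> graph_subderiv_normal_cone D y 0 q" and c: "c > 0"
  shows "zh \<in> dir_limiting_normal_cone D y (c *\<^sub>R q)"
proof -
  obtain qk wk t \<tau> where h: "qk \<longlonglongrightarrow> q" "wk \<longlonglongrightarrow> zh" "\<forall>k. t k > 0" "t \<longlonglongrightarrow> 0"
      "\<forall>k. \<tau> k > 0" "\<forall>k. (y + t k *\<^sub>R qk k, 0 + \<tau> k *\<^sub>R wk k) \<in> gph_normal_cone D"
    using assms(1) unfolding graph_subderiv_normal_cone_def by blast
  have N: "wk k \<in> limiting_normal_cone D (y + (t k / c) *\<^sub>R (c *\<^sub>R qk k))" for k
  proof -
    have "\<tau> k *\<^sub>R wk k \<in> limiting_normal_cone D (y + t k *\<^sub>R qk k)"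
      using h(6)[rule_format, of k] by (simp add: gph_normal_cone_def)
    from lim_scale[OF _ this, of "inverse (\<tau> k)"] show ?thesis using h(5)[rule_format, of k] c by simp
  qed
  have "(\<lambda>k. c *\<^sub>R qk k) \<longlonglongrightarrow> c *\<^sub>R q" using h(1) by (intro tendsto_intros)
  moreover have "(\<lambda>k. t k / c) \<longlonglongrightarrow> 0 / c" using h(4) c by (intro tendsto_intros) auto
  moreover have "\<forall>k. t k / c > 0" using h(3) c by simp
  ultimately show ?thesis using key[of "\<lambda>k. t k / c" "\<lambda>k. c *\<^sub>R qk k" "c *\<^sub>R q" wk zh D y] h N by auto
qed

lemma adj0: "adjoint (blinfun_apply (X :: 'a::euclidean_space \<Rightarrow>\<^sub>L 'b::euclidean_space)) 0 = 0"
  by (rule linear_0[OF adjoint_linear[OF bounded_linear.linear[OF blinfun.bounded_linear_right]]])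

theorem mainTheorem14:
  fixes g :: "'a::euclidean_space \<Rightarrow> 'b::euclidean_space"
    and g' :: "'a \<Rightarrow> ('a \<Rightarrow>\<^sub>L 'b)"
    and g'' :: "'a \<Rightarrow> ('a \<Rightarrow>\<^sub>L ('a \<Rightarrow>\<^sub>L 'b))"
    and D :: "'b set" and xb u :: 'a
  assumes dg: "\<And>x. (g has_derivative blinfun_apply (g' x)) (at x)"
    and d2g: "\<And>x. (g' has_derivative blinfun_apply (g'' x)) (at x)"
    and cont2: "continuous_on UNIV g''"
    and Dclosed: "closed D"
    and feas: "g xb \<in> D"
    and unit: "norm u = 1"
    and tang: "blinfun_apply (g' xb) u \<in> tangent_cone D (g xb)"
    and foscms: "\<And>ys. ys \<in> dir_limiting_normal_cone D (g xb) (blinfun_apply (g' xb) u)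
                  \<Longrightarrow> adjoint (blinfun_apply (g' xb)) ys = 0 \<Longrightarrow> ys = 0"
  shows
   "(\<forall>ys zs. adjoint (blinfun_apply (g' xb)) ys = 0
        \<and> adjoint (blinfun_apply (blinfun_apply (g'' xb) u)) ys
            + adjoint (blinfun_apply (g' xb)) zs = 0
        \<and> ys \<in> dir_limiting_normal_cone D (g xb) (blinfun_apply (g' xb) u)
        \<and> zs \<in> graph_deriv_normal_cone D (g xb) ys (blinfun_apply (g' xb) u)
        \<longrightarrow> ys = 0)
  \<and> (blinfun_apply (g' xb) u = 0 \<longrightarrow>
       (\<forall>ys zh. adjoint (blinfun_apply (g' xb)) ys = 0
        \<and> adjoint (blinfun_apply (g' xb)) zh = 0
        \<and> ys \<in> dir_limiting_normal_cone D (g xb) (blinfun_apply (g' xb) u)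
        \<and> zh \<in> graph_deriv_normal_cone D (g xb) ys 0
        \<longrightarrow> zh = 0))
  \<and> (blinfun_apply (g' xb) u \<noteq> 0 \<longrightarrow>
       (\<forall>ys zh. adjoint (blinfun_apply (g' xb)) ys = 0
        \<and> adjoint (blinfun_apply (g' xb)) zh = 0
        \<and> ys \<in> dir_limiting_normal_cone D (g xb) (blinfun_apply (g' xb) u)
        \<longrightarrow> zh \<notin> graph_subderiv_normal_cone D (g xb) ys
               (blinfun_apply (g' xb) u /\<^sub>R norm (blinfun_apply (g' xb) u))))
  \<and> (\<forall>xs ys zs. xs = adjoint (blinfun_apply (blinfun_apply (g'' xb) u)) ys
                      + adjoint (blinfun_apply (g' xb)) zs
        \<and> ys \<in> dir_limiting_normal_cone D (g xb) (blinfun_apply (g' xb) u)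
        \<and> adjoint (blinfun_apply (g' xb)) ys = 0
        \<and> zs \<in> graph_deriv_normal_cone D (g xb) ys (blinfun_apply (g' xb) u)
        \<longrightarrow> (\<exists>lam. lam \<in> dir_limiting_normal_cone D (g xb) (blinfun_apply (g' xb) u)
                \<and> lam \<in> limiting_normal_cone D (g xb)
                \<and> xs = adjoint (blinfun_apply (g' xb)) lam))"
proof (intro conjI allI impI)
  fix ys zs
  assume "adjoint (blinfun_apply (g' xb)) ys = 0 \<and>
       adjoint (blinfun_apply (blinfun_apply (g'' xb) u)) ys + adjoint (blinfun_apply (g' xb)) zs = 0 \<and>
       ys \<in> dir_limiting_normal_cone D (g xb) (blinfun_apply (g' xb) u) \<and>
       zs \<in> graph_deriv_normal_cone D (g xb) ys (blinfun_apply (g' xb) u)"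
  then show "ys = 0" using foscms by blast
next
  fix ys zh
  assume z: "blinfun_apply (g' xb) u = 0"
    and H: "adjoint (blinfun_apply (g' xb)) ys = 0 \<and> adjoint (blinfun_apply (g' xb)) zh = 0 \<and>
       ys \<in> dir_limiting_normal_cone D (g xb) (blinfun_apply (g' xb) u) \<and>
       zh \<in> graph_deriv_normal_cone D (g xb) ys 0"
  then have "ys = 0" using foscms by blast
  then have "zh \<in> dir_limiting_normal_cone D (g xb) 0" using H gd_dir by blast
  then show "zh = 0" using foscms H z by simp
next
  fix ys zh
  assume nz: "blinfun_apply (g' xb) u \<noteq> 0"
    and H: "adjoint (blinfun_apply (g' xb)) ys = 0 \<and> adjoint (blinfun_apply (g' xb)) zh = 0 \<and>
       ys \<in> dir_limiting_normal_cone D (g xb) (blinfun_apply (g' xb) u)"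
  then have y0: "ys = 0" using foscms by blast
  show "zh \<notin> graph_subderiv_normal_cone D (g xb) ys
               (blinfun_apply (g' xb) u /\<^sub>R norm (blinfun_apply (g' xb) u))"
  proof
    assume zin: "zh \<in> graph_subderiv_normal_cone D (g xb) ys
               (blinfun_apply (g' xb) u /\<^sub>R norm (blinfun_apply (g' xb) u))"
    have "zh \<in> dir_limiting_normal_cone D (g xb) (norm (blinfun_apply (g' xb) u) *\<^sub>R
              (blinfun_apply (g' xb) u /\<^sub>R norm (blinfun_apply (g' xb) u)))"
      using sub_dir[of zh D "g xb" "blinfun_apply (g' xb) u /\<^sub>R norm (blinfun_apply (g' xb) u)"
          "norm (blinfun_apply (g' xb) u)"] zin y0 nz by simp
    then have "zh \<in> dir_limiting_normal_cone D (g xb) (blinfun_apply (g' xb) u)" using nz by simp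
    then have "zh = 0" using foscms H by blast
    moreover have "norm zh = 1" using zin unfolding graph_subderiv_normal_cone_def by blast
    ultimately show False by simp
  qed
next
  fix xs ys zs
  assume H: "xs = adjoint (blinfun_apply (blinfun_apply (g'' xb) u)) ys + adjoint (blinfun_apply (g' xb)) zs \<and>
       ys \<in> dir_limiting_normal_cone D (g xb) (blinfun_apply (g' xb) u) \<and>
       adjoint (blinfun_apply (g' xb)) ys = 0 \<and>
       zs \<in> graph_deriv_normal_cone D (g xb) ys (blinfun_apply (g' xb) u)"
  then have y0: "ys = 0" using foscms by blast
  then have zd: "zs \<in> dir_limiting_normal_cone D (g xb) (blinfun_apply (g' xb) u)" using H gd_dir by blast
  have "xs = adjoint (blinfun_apply (g' xb)) zs" using H y0 adj0 by simp
  then show "\<exists>lam. lam \<in> dir_limiting_normal_cone D (g xb) (blinfun_apply (g' xb) u) \<and>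
             lam \<in> limiting_normal_cone D (g xb) \<and> xs = adjoint (blinfun_apply (g' xb)) lam"
    using zd dir_sub_lim by blast
qed

end
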